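(* Let $k$ be a positive integer and $n_0,\ldots,n_{k-1}$ positive integers, with indices read modulo $k$. For each $j\in\{0,\ldots,k-1\}$ let $A^{(j)}$ be a real $n_j\times n_{j+1}$ matrix, and suppose the signed digraph $G_{A^{(0)}A^{(1)}\cdots A^{(k-1)}}$ is e-cycle-free. Then every matrix in $\mathcal{Q}(A^{(0)})\mathcal{Q}(A^{(1)})\cdots\mathcal{Q}(A^{(k-1)})$ is a $P_0$-matrix.
   Context: Indices $j$ are taken modulo $k$. For a real matrix $M$, $\mathcal{Q}(M)$ is the set of real matrices $X$ of the same dimensions with $M_{ij}>0\Rightarrow X_{ij}>0$, $M_{ij}<0\Rightarrow X_{ij}<0$, $M_{ij}=0\Rightarrow X_{ij}=0$, and $\mathcal{Q}(A^{(0)})\cdots\mathcal{Q}(A^{(k-1)})=\{B^{(0)}\cdots B^{(k-1)} : B^{(j)}\in\mathcal{Q}(A^{(j)})\}$. The signed digraph $G=G_{A^{(0)}\cdots A^{(k-1)}}$ has vertex set the disjoint union of $V_0,\ldots,V_{k-1}$ with $V_j=\{V_j^1,\ldots,V_j^{n_j}\}$; there is a directed edge from $V_j^r$ to $V_{j+1}^s$ iff $(A^{(j)})_{rs}\neq 0$, with the sign of $(A^{(j)})_{rs}$; no other edges (loops allowed when $k=1$). Every directed cycle has length a multiple of $k$; a directed cycle with $kr_1$ edges, $r_2$ of them negative, is an e-cycle if $(-1)^{r_1+r_2}=1$ and an o-cycle otherwise; $G$ is e-cycle-free if it has no e-cycle. A $P_0$-matrix is a real square matrix all of whose principal minors are nonnegative.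 *)

theory Defs
  imports "Jordan_Normal_Form.Determinant" "Jordan_Normal_Form.DL_Submatrix"
begin

text \<open>A cyclic family of matrices: k, dimensions n j (j < k), matrices A j (j < k),
  where A j is an (n j) x (n ((j+1) mod k)) real matrix.\<close>

definition sign_pattern_class :: "real mat \<Rightarrow> real mat set" ("\<Q>") where
  "\<Q> M = {X. dim_row X = dim_row M \<and> dim_col X = dim_col M \<and>
     (\<forall>i < dim_row M. \<forall>j < dim_col M.
        (M $$ (i,j) > 0 \<longrightarrow> X $$ (i,j) > 0) \<and>
        (M $$ (i,j) < 0 \<longrightarrow> X $$ (i,j) < 0) \<and>
        (M $$ (i,j) = 0 \<longrightarrow> X $$ (i,j) = 0))}"

fun chain_prod :: "nat \<Rightarrow> (nat \<Rightarrow> real mat) \<Rightarrow> nat \<Rightarrow> real mat" where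
  "chain_prod d B 0 = 1\<^sub>m d"
| "chain_prod d B (Suc m) = chain_prod d B m * B m"

definition cyclic_product :: "nat \<Rightarrow> (nat \<Rightarrow> real mat) \<Rightarrow> real mat" where
  "cyclic_product k B = chain_prod (dim_row (B 0)) B k"

definition sign_class_product :: "nat \<Rightarrow> (nat \<Rightarrow> real mat) \<Rightarrow> real mat set" where
  "sign_class_product k A = {cyclic_product k B | B. \<forall>j < k. B j \<in> \<Q> (A j)}"

text \<open>Signed digraph G_{A0...A(k-1)}: vertices (j, r) standing for V_j^r
  (0-based: j < k, r < n j). Edge from (j,r) to ((j+1) mod k, s) iff (A j)_{rs} \<noteq> 0,
  with the sign of (A j)_{rs}.\<close>
definition is_vertex :: "nat \<Rightarrow> (nat \<Rightarrow> real mat) \<Rightarrow> nat \<times> nat \<Rightarrow> bool" where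
  "is_vertex k A v \<longleftrightarrow> fst v < k \<and> snd v < dim_row (A (fst v))"

definition edge_weight :: "(nat \<Rightarrow> real mat) \<Rightarrow> nat \<times> nat \<Rightarrow> nat \<times> nat \<Rightarrow> real" where
  "edge_weight A v w = A (fst v) $$ (snd v, snd w)"

definition is_edge :: "nat \<Rightarrow> (nat \<Rightarrow> real mat) \<Rightarrow> nat \<times> nat \<Rightarrow> nat \<times> nat \<Rightarrow> bool" where
  "is_edge k A v w \<longleftrightarrow> is_vertex k A v \<and> is_vertex k A w \<and>
     fst w = Suc (fst v) mod k \<and> edge_weight A v w \<noteq> 0"

definition is_dcycle :: "nat \<Rightarrow> (nat \<Rightarrow> real mat) \<Rightarrow> (nat \<times> nat) list \<Rightarrow> bool" where
  "is_dcycle k A cs \<longleftrightarrow> cs \<noteq> [] \<and> distinct cs \<and>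
     (\<forall>i < length cs. is_edge k A (cs ! i) (cs ! (Suc i mod length cs)))"

definition neg_edges :: "(nat \<Rightarrow> real mat) \<Rightarrow> (nat \<times> nat) list \<Rightarrow> nat" where
  "neg_edges A cs = card {i. i < length cs \<and> edge_weight A (cs ! i) (cs ! (Suc i mod length cs)) < 0}"

text \<open>e-cycle: cycle with k*r1 edges, r2 negative, and (-1)^(r1+r2) = 1.\<close>
definition is_e_cycle :: "nat \<Rightarrow> (nat \<Rightarrow> real mat) \<Rightarrow> (nat \<times> nat) list \<Rightarrow> bool" where
  "is_e_cycle k A cs \<longleftrightarrow> is_dcycle k A cs \<and>
     (-1::int) ^ (length cs div k + neg_edges A cs) = 1"

definition e_cycle_free :: "nat \<Rightarrow> (nat \<Rightarrow> real mat) \<Rightarrow> bool" where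
  "e_cycle_free k A \<longleftrightarrow> (\<nexists>cs. is_e_cycle k A cs)"

definition P0_matrix :: "real mat \<Rightarrow> bool" where
  "P0_matrix M \<longleftrightarrow> M \<in> carrier_mat (dim_row M) (dim_row M) \<and>
     (\<forall>S \<subseteq> {..<dim_row M}. det (submatrix M S S) \<ge> 0)"

end

theory Submission
  imports Defs "HOL-Library.Multiset"
begin

lemma cb_col:
  fixes P B :: "'a::comm_ring_1 mat"
  assumes P: "P \<in> carrier_mat r p" and B: "B \<in> carrier_mat p q"
   and g: "\<forall>i<m. g i < r" and h: "\<forall>j<m. h j < q"
  shows "det (mat m m (\<lambda>(i,j). (P*B)$$(g i, h j))) =
    (\<Sum>f\<in>{f. (\<forall>i\<in>{0..<m}. f i \<in> {0..<p}) \<and> (\<forall>i. i \<notin> {0..<m} \<longrightarrow> f i = i)}.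
       det (mat m m (\<lambda>(i,j). P$$(g i, f j))) * (\<Prod>j<m. B$$(f j, h j)))"
proof -
  define v where "v = (\<lambda>l. vec m (\<lambda>i. P$$(g i, l)))"
  let ?X = "mat m m (\<lambda>(i,j). (P*B)$$(g i, h j))"
  have X: "?X \<in> carrier_mat m m" by auto
  have T: "transpose_mat ?X = mat\<^sub>r m m (\<lambda>j. finsum_vec TYPE('a) m (\<lambda>l. B$$(l,h j) \<cdot>\<^sub>v v l) {0..<p})"
  proof (rule eq_matI)
    fix j i assume j: "j < dim_row (mat\<^sub>r m m (\<lambda>j. finsum_vec TYPE('a) m (\<lambda>l. B$$(l,h j) \<cdot>\<^sub>v v l) {0..<p}))"
      and i: "i < dim_col (mat\<^sub>r m m (\<lambda>j. finsum_vec TYPE('a) m (\<lambda>l. B$$(l,h j) \<cdot>\<^sub>v v l) {0..<p}))"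
    hence j: "j < m" and i: "i < m" by auto
    have "transpose_mat ?X $$ (j,i) = (P*B)$$(g i, h j)" using i j by auto
    also have "\<dots> = (\<Sum>l<p. P$$(g i,l) * B$$(l,h j))"
      using P B g h i j by (auto simp: scalar_prod_def intro!: sum.cong)
    also have "\<dots> = finsum_vec TYPE('a) m (\<lambda>l. B$$(l,h j) \<cdot>\<^sub>v v l) {0..<p} $ i"
      by (subst index_finsum_vec, insert i, auto simp: v_def lessThan_atLeast0 mult.commute intro!: sum.cong)
    finally show "transpose_mat ?X $$ (j,i) = mat\<^sub>r m m (\<lambda>j. finsum_vec TYPE('a) m (\<lambda>l. B$$(l,h j) \<cdot>\<^sub>v v l) {0..<p}) $$ (j,i)"
      using i j by simp
  qed auto
  have "det ?X = det (transpose_mat ?X)" using det_transpose[OF X] by simp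
  also have "\<dots> = (\<Sum>f\<in>{f. (\<forall>i\<in>{0..<m}. f i \<in> {0..<p}) \<and> (\<forall>i. i \<notin> {0..<m} \<longrightarrow> f i = i)}.
       det (mat\<^sub>r m m (\<lambda>j. B$$(f j,h j) \<cdot>\<^sub>v v (f j))))"
    unfolding T by (rule det_linear_rows_sum, auto simp: v_def)
  also have "\<dots> = (\<Sum>f\<in>{f. (\<forall>i\<in>{0..<m}. f i \<in> {0..<p}) \<and> (\<forall>i. i \<notin> {0..<m} \<longrightarrow> f i = i)}.
       det (mat m m (\<lambda>(i,j). P$$(g i, f j))) * (\<Prod>j<m. B$$(f j, h j)))"
  proof (rule sum.cong[OF refl])
    fix f
    have "det (mat\<^sub>r m m (\<lambda>j. B$$(f j,h j) \<cdot>\<^sub>v v (f j))) = prod (\<lambda>j. B$$(f j,h j)) {0..<m} * det (mat\<^sub>r m m (\<lambda>j. v (f j)))"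
      by (rule det_rows_mul, auto simp: v_def)
    moreover have "mat\<^sub>r m m (\<lambda>j. v (f j)) = transpose_mat (mat m m (\<lambda>(i,j). P$$(g i, f j)))"
      by (rule eq_matI, auto simp: v_def)
    moreover have "det (transpose_mat (mat m m (\<lambda>(i,j). P$$(g i, f j)))) = det (mat m m (\<lambda>(i,j). P$$(g i, f j)))"
      by (rule det_transpose, auto)
    ultimately show "det (mat\<^sub>r m m (\<lambda>j. B$$(f j,h j) \<cdot>\<^sub>v v (f j))) = det (mat m m (\<lambda>(i,j). P$$(g i, f j))) * (\<Prod>j<m. B$$(f j, h j))"
      by (simp add: lessThan_atLeast0 mult.commute)
  qed
  finally show ?thesis .
qed

definition iscyc :: "(nat \<Rightarrow> nat) \<Rightarrow> nat list \<Rightarrow> bool" where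
  "iscyc p cs \<longleftrightarrow> cs \<noteq> [] \<and> distinct cs \<and> (\<forall>i<length cs. p (cs!i) = cs!(Suc i mod length cs))"

lemma insert_nth_formula:
  assumes "i < length cs" "j \<le> length cs"
  shows "(take (Suc i) cs @ a # drop (Suc i) cs) ! j = (if j \<le> i then cs!j else if j = Suc i then a else cs!(j-1))"
  using assms apply (auto simp: nth_append min_def nth_Cons split: nat.split)
  apply (rule arg_cong[of _ _ "(!) cs"]) by linarith

lemma cyc_insert:
  assumes cyc: "iscyc p' cs" and i: "i < length cs" and bi: "cs!i = b"
    and pb: "p b = a" and pa: "p a = p' b" and an: "a \<notin> set cs"
    and oth: "\<And>x. x \<in> set cs \<Longrightarrow> x \<noteq> b \<Longrightarrow> p x = p' x"
  shows "iscyc p (take (Suc i) cs @ a # drop (Suc i) cs)"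
proof -
  let ?L = "length cs"
  let ?c = "take (Suc i) cs @ a # drop (Suc i) cs"
  have len: "length ?c = Suc ?L" using i by simp
  have dist: "distinct cs" and cc: "\<And>j. j < ?L \<Longrightarrow> p' (cs!j) = cs!(Suc j mod ?L)" using cyc unfolding iscyc_def by auto
  have d2: "distinct ?c" using dist an
    by (auto simp: set_take_disj_set_drop_if_distinct dest: in_set_takeD in_set_dropD)
  have nf: "\<And>j. j \<le> ?L \<Longrightarrow> ?c ! j = (if j \<le> i then cs!j else if j = Suc i then a else cs!(j-1))"
    using insert_nth_formula[OF i] by blast
  have step: "p (?c!j) = ?c!(Suc j mod Suc ?L)" if j: "j < Suc ?L" for j
  proof -
    consider "j < i" | "j = i" | "j = Suc i" | "j > Suc i" by linarith
    then show ?thesis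
    proof cases
      case 1
      have ne: "cs!j \<noteq> b" using dist i 1 bi nth_eq_iff_index_eq by fastforce
      have "p (?c!j) = p' (cs!j)" using nf[of j] 1 j oth[of "cs!j"] ne i by simp
      also have "\<dots> = cs!(Suc j)" using cc[of j] 1 i by simp
      also have "\<dots> = ?c!(Suc j mod Suc ?L)" using nf[of "Suc j"] 1 i by simp
      finally show ?thesis .
    next
      case 2
      then show ?thesis using nf[of i] nf[of "Suc i"] i bi pb by simp
    next
      case 3
      show ?thesis
      proof (cases "Suc i < ?L")
        case True
        have "p (?c!j) = cs!(Suc i mod ?L)" using nf[of j] 3 i pa cc[of i] bi by simp
        also have "\<dots> = ?c!(Suc j mod Suc ?L)" using nf[of "Suc j"] 3 True by simp
        finally show ?thesis .
      next
        case False
        hence L: "?L = Suc i" using i by simp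
        have "p (?c!j) = cs!(Suc i mod ?L)" using nf[of j] 3 i pa cc[of i] bi by simp
        also have "\<dots> = cs ! 0" using L by simp
        also have "\<dots> = ?c!(Suc j mod Suc ?L)" using nf[of 0] 3 L by simp
        finally show ?thesis .
      qed
    next
      case 4
      define j' where "j' = j - 1"
      have j'1: "i < j'" "j' < ?L" using 4 j unfolding j'_def by auto
      have ne: "cs!j' \<noteq> b" using dist i j'1 bi nth_eq_iff_index_eq by fastforce
      have "p (?c!j) = p' (cs!j')" using nf[of j] 4 j oth[of "cs!j'"] ne j'1 unfolding j'_def by simp
      also have "\<dots> = cs!(Suc j' mod ?L)" using cc[of j'] j'1 by simp
      also have "\<dots> = ?c!(Suc j mod Suc ?L)"
      proof (cases "Suc j' < ?L")
        case True
        then show ?thesis using nf[of "Suc j"] 4 j'1 unfolding j'_def by auto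
      next
        case False
        hence sj: "Suc j' = ?L" using j'1 by simp
        hence jL: "j = ?L" using 4 unfolding j'_def by simp
        have "cs!(Suc j' mod ?L) = cs!0" using sj by simp
        also have "\<dots> = ?c ! 0" using nf[of 0] by simp
        also have "\<dots> = ?c!(Suc j mod Suc ?L)" using jL by simp
        finally show ?thesis .
      qed
      finally show ?thesis .
    qed
  qed
  show ?thesis unfolding iscyc_def using d2 len step by auto
qed

lemma sign_lemma:
  fixes \<epsilon> :: "nat \<Rightarrow> real"
  assumes "finite A" "p permutes A" "\<forall>x\<in>A. \<epsilon> x = 1 \<or> \<epsilon> x = -1"
   "\<forall>cs. iscyc p cs \<longrightarrow> set cs \<subseteq> A \<longrightarrow> prod \<epsilon> (set cs) = - ((-1)^length cs)"
  shows "prod \<epsilon> A = of_int (sign p)"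
  using assms
proof (induct "card A" arbitrary: A p \<epsilon> rule: less_induct)
  case less
  note fA = less.prems(1) and pA = less.prems(2) and eps = less.prems(3) and cyc = less.prems(4)
  show ?case
  proof (cases "A = {}")
    case True
    then have "p = id" using pA permutes_empty by blast
    then show ?thesis using True by (simp add: sign_id)
  next
    case False
    then obtain a where a: "a \<in> A" by auto
    have cardlt: "card (A - {a}) < card A" using a fA by (meson card_Diff1_less)
    show ?thesis
    proof (cases "p a = a")
      case True
      have pA': "p permutes (A - {a})" by (rule permutes_superset[OF pA]) (use True in auto)
      have "iscyc p [a]" unfolding iscyc_def using True by simp
      hence ea: "\<epsilon> a = 1" using cyc[rule_format, of "[a]"] a by simp
      have "prod \<epsilon> (A - {a}) = of_int (sign p)"
        by (rule less.hyps[OF cardlt _ pA'], use fA eps cyc in auto)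
      moreover have "prod \<epsilon> A = \<epsilon> a * prod \<epsilon> (A - {a})" using a fA by (meson prod.remove)
      ultimately show ?thesis using ea by simp
    next
      case False
      define b where "b = Hilbert_Choice.inv p a"
      have pb: "p b = a" unfolding b_def using pA by (meson permutes_inverses(1))
      have bA: "b \<in> A" unfolding b_def using a pA by (simp add: permutes_inv permutes_in_image)
      have ba: "b \<noteq> a" using pb False by auto
      define p' where "p' = p \<circ> transpose a b"
      have p'A: "p' permutes A" unfolding p'_def using permutes_compose[OF permutes_swap_id[OF a bA] pA] .
      have p'a: "p' a = a" unfolding p'_def using pb by simp
      have p'b: "p' b = p a" unfolding p'_def by simp
      have p'o: "\<And>x. x \<noteq> a \<Longrightarrow> x \<noteq> b \<Longrightarrow> p' x = p x" unfolding p'_def by simp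
      have pA': "p' permutes (A - {a})" by (rule permutes_superset[OF p'A]) (use p'a in auto)
      have sg: "sign p' = - sign p"
      proof -
        have "permutation p" using pA fA permutation_permutes by blast
        moreover have "permutation (transpose a b)" by (rule permutation_swap_id)
        ultimately have "sign p' = sign p * sign (transpose a b)" unfolding p'_def by (rule sign_compose)
        then show ?thesis using ba by (simp add: sign_swap_id)
      qed
      define \<epsilon>' where "\<epsilon>' = \<epsilon>(b := - (\<epsilon> b * \<epsilon> a))"
      have eps': "\<forall>x\<in>A - {a}. \<epsilon>' x = 1 \<or> \<epsilon>' x = -1"
      proof
        fix x assume x: "x \<in> A - {a}"
        show "\<epsilon>' x = 1 \<or> \<epsilon>' x = -1"
        proof (cases "x = b")
          case True
          have "\<epsilon> a = 1 \<or> \<epsilon> a = -1" "\<epsilon> b = 1 \<or> \<epsilon> b = -1" using eps a bA by auto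
          then show ?thesis using True unfolding \<epsilon>'_def by auto
        next
          case False
          then show ?thesis using eps x unfolding \<epsilon>'_def by auto
        qed
      qed
      have cyc': "\<forall>cs. iscyc p' cs \<longrightarrow> set cs \<subseteq> A - {a} \<longrightarrow> prod \<epsilon>' (set cs) = - ((-1)^length cs)"
      proof (intro allI impI)
        fix cs assume cs: "iscyc p' cs" and sub: "set cs \<subseteq> A - {a}"
        have an: "a \<notin> set cs" using sub by auto
        show "prod \<epsilon>' (set cs) = - ((-1)^length cs)"
        proof (cases "b \<in> set cs")
          case False
          have "iscyc p cs" using cs p'o an False unfolding iscyc_def
            by (metis nth_mem)
          hence "prod \<epsilon> (set cs) = - ((-1)^length cs)" using cyc sub by auto
          moreover have "prod \<epsilon>' (set cs) = prod \<epsilon> (set cs)"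
            unfolding \<epsilon>'_def using False by (intro prod.cong) auto
          ultimately show ?thesis by simp
        next
          case True
          then obtain i where i: "i < length cs" "cs!i = b" by (meson in_set_conv_nth)
          let ?c = "take (Suc i) cs @ a # drop (Suc i) cs"
          have c2: "iscyc p ?c"
            using cyc_insert[of p' cs i b p a, OF cs i(1) i(2) pb p'b[symmetric] an] p'o an by metis
          have "set ?c = insert a (set (take (Suc i) cs) \<union> set (drop (Suc i) cs))" by simp
          moreover have "set (take (Suc i) cs) \<union> set (drop (Suc i) cs) = set cs"
            by (metis append_take_drop_id set_append)
          ultimately have setc: "set ?c = insert a (set cs)" by simp
          have lenc: "length ?c = Suc (length cs)" using i by simp
          have "set ?c \<subseteq> A" using setc sub a by auto
          hence "prod \<epsilon> (set ?c) = - ((-1)^length ?c)" using cyc c2 by blast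
          hence e1: "\<epsilon> a * prod \<epsilon> (set cs) = (-1)^length cs"
            using setc lenc an by simp
          have "prod \<epsilon>' (set cs) = \<epsilon>' b * prod \<epsilon>' (set cs - {b})" using True by (simp add: prod.remove)
          also have "prod \<epsilon>' (set cs - {b}) = prod \<epsilon> (set cs - {b})" unfolding \<epsilon>'_def by (intro prod.cong) auto
          also have "\<epsilon>' b * prod \<epsilon> (set cs - {b}) = - (\<epsilon> a * (\<epsilon> b * prod \<epsilon> (set cs - {b})))"
            unfolding \<epsilon>'_def by simp
          also have "\<epsilon> b * prod \<epsilon> (set cs - {b}) = prod \<epsilon> (set cs)" using True by (simp add: prod.remove)
          finally show ?thesis using e1 by simp
        qed
      qed
      have fA': "finite (A - {a})" using fA by simp
      have IH: "prod \<epsilon>' (A - {a}) = of_int (sign p')"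
        using less.hyps[OF cardlt fA' pA' eps' cyc'] .
      have "prod \<epsilon>' (A - {a}) = \<epsilon>' b * prod \<epsilon>' (A - {a} - {b})" using bA ba fA by (simp add: prod.remove)
      also have "prod \<epsilon>' (A - {a} - {b}) = prod \<epsilon> (A - {a} - {b})" unfolding \<epsilon>'_def by (intro prod.cong) auto
      finally have "prod \<epsilon>' (A - {a}) = - (\<epsilon> a * (\<epsilon> b * prod \<epsilon> (A - {a} - {b})))" unfolding \<epsilon>'_def by simp
      also have "\<epsilon> b * prod \<epsilon> (A - {a} - {b}) = prod \<epsilon> (A - {a})" using bA ba fA
        by (subst (2) prod.remove[of _ b]) auto
      also have "\<epsilon> a * prod \<epsilon> (A - {a}) = prod \<epsilon> A" using a fA by (simp add: prod.remove)
      finally show ?thesis using IH sg by simp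
    qed
  qed
qed

lemma sum_mset_sum_set: "finite F \<Longrightarrow> sum_mset (\<Sum>f\<in>F. N f) = (\<Sum>f\<in>F. sum_mset (N f))"
  by (induct F rule: finite_induct) auto

lemma sum_mset_mult_right: "sum_mset M * (c::real) = sum_mset (image_mset (\<lambda>x. x * c) M)"
  by (induct M) (auto simp: algebra_simps)


lemma det_noninj_zero:
  fixes M :: "'a::comm_ring_1 mat"
  assumes "\<not> inj_on h {0..<m}"
  shows "det (mat m m (\<lambda>(i,j). M$$(g i, h j))) = 0"
proof -
  from assms obtain i j where ij: "i < m" "j < m" "i \<noteq> j" "h i = h j" unfolding inj_on_def by auto
  show ?thesis
    by (rule det_identical_columns[of _ m i j], insert ij, auto intro!: eq_vecI)
qed

lemma chain_carrier:
  assumes k: "k > 0" and B: "\<forall>j<k. B j \<in> carrier_mat (n j) (n (Suc j mod k))"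
  shows "L \<le> k \<Longrightarrow> chain_prod (n 0) B L \<in> carrier_mat (n 0) (n (L mod k))"
proof (induct L)
  case 0
  then show ?case by simp
next
  case (Suc L)
  hence "chain_prod (n 0) B L \<in> carrier_mat (n 0) (n L)" by simp
  moreover have "B L \<in> carrier_mat (n L) (n (Suc L mod k))" using B Suc by simp
  ultimately show ?case by simp
qed

definition goodterm :: "nat \<Rightarrow> (nat \<Rightarrow> nat) \<Rightarrow> (nat \<Rightarrow> real mat) \<Rightarrow> nat \<Rightarrow> (nat \<Rightarrow> nat) \<Rightarrow> (nat \<Rightarrow> nat) \<Rightarrow> nat \<Rightarrow> real \<Rightarrow> bool" where
  "goodterm k n B m g h L x \<longleftrightarrow> x = 0 \<or> (\<exists>p F. p permutes {0..<m} \<and>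
     (\<forall>j<m. F 0 j = g j \<and> F L j = h (p j)) \<and>
     (\<forall>l\<le>L. inj_on (F l) {0..<m} \<and> (\<forall>j<m. F l j < n (l mod k))) \<and>
     x = signof p * (\<Prod>j<m. \<Prod>l<L. B l $$ (F l j, F (Suc l) j)))"

lemma good_step:
  assumes gd: "goodterm k n B m g f L y" and hinj: "inj_on h {0..<m}"
    and hb: "\<forall>j<m. h j < n (Suc L mod k)"
  shows "goodterm k n B m g h (Suc L) (y * (\<Prod>j<m. B L $$ (f j, h j)))"
proof (cases "y = 0")
  case True
  then show ?thesis unfolding goodterm_def by simp
next
  case False
  then obtain p F where p: "p permutes {0..<m}" and F0: "\<forall>j<m. F 0 j = g j \<and> F L j = f (p j)"
    and Fl: "\<forall>l\<le>L. inj_on (F l) {0..<m} \<and> (\<forall>j<m. F l j < n (l mod k))"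
    and y: "y = signof p * (\<Prod>j<m. \<Prod>l<L. B l $$ (F l j, F (Suc l) j))"
    using gd unfolding goodterm_def by blast
  define F' where "F' = F(Suc L := (\<lambda>j. h (p j)))"
  have pm: "\<And>j. j < m \<Longrightarrow> p j < m" using p by (simp add: permutes_in_image)
  have "(\<Prod>j<m. B L $$ (f j, h j)) = (\<Prod>j\<in>{0..<m}. B L $$ (f (p j), h (p j)))"
    using prod.permute[OF p, of "\<lambda>j. B L $$ (f j, h j)"] by (simp add: lessThan_atLeast0)
  also have "\<dots> = (\<Prod>j<m. B L $$ (F' L j, F' (Suc L) j))"
    unfolding F'_def using F0 by (auto simp: lessThan_atLeast0 intro!: prod.cong)
  finally have e1: "(\<Prod>j<m. B L $$ (f j, h j)) = (\<Prod>j<m. B L $$ (F' L j, F' (Suc L) j))" .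
  have e2: "(\<Prod>j<m. \<Prod>l<L. B l $$ (F l j, F (Suc l) j)) = (\<Prod>j<m. \<Prod>l<L. B l $$ (F' l j, F' (Suc l) j))"
    unfolding F'_def by (intro prod.cong refl) auto
  have val: "y * (\<Prod>j<m. B L $$ (f j, h j)) = signof p * (\<Prod>j<m. \<Prod>l<Suc L. B l $$ (F' l j, F' (Suc l) j))"
    unfolding y e1 e2 by (simp add: prod.distrib mult.assoc)
  have injh: "inj_on (\<lambda>j. h (p j)) {0..<m}"
  proof (rule inj_onI)
    fix x z assume "x \<in> {0..<m}" "z \<in> {0..<m}" "h (p x) = h (p z)"
    hence "p x = p z" using hinj pm unfolding inj_on_def by auto
    thus "x = z" using p by (metis permutes_inj inj_eq)
  qed
  have A1: "\<forall>j<m. F' 0 j = g j \<and> F' (Suc L) j = h (p j)" unfolding F'_def using F0 by auto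
  have A2: "\<forall>l\<le>Suc L. inj_on (F' l) {0..<m} \<and> (\<forall>j<m. F' l j < n (l mod k))"
  proof (intro allI impI conjI)
    fix l assume l: "l \<le> Suc L"
    show "inj_on (F' l) {0..<m}"
      using l Fl injh unfolding F'_def by (cases "l = Suc L") auto
    fix j assume "j < m"
    then show "F' l j < n (l mod k)"
      using l Fl hb pm unfolding F'_def by (cases "l = Suc L") auto
  qed
  show ?thesis unfolding goodterm_def using p A1 A2 val by blast
qed

lemma expand:
  assumes k: "k > 0" and B: "\<forall>j<k. B j \<in> carrier_mat (n j) (n (Suc j mod k))"
    and g: "inj_on g {0..<m}" "\<forall>j<m. g j < n 0"
  shows "L \<le> k \<Longrightarrow> \<forall>j<m. h j < n (L mod k) \<Longrightarrow>
    \<exists>M. (\<forall>x\<in>#M. goodterm k n B m g h L x) \<and>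
      det (mat m m (\<lambda>(i,j). chain_prod (n 0) B L $$ (g i, h j))) = sum_mset M"
proof (induct L arbitrary: h)
  case 0
  show ?case
  proof (cases "inj_on h {0..<m}")
    case False
    show ?thesis by (rule exI[of _ "{#}"], simp add: det_noninj_zero[OF False])
  next
    case True
    let ?M = "mat m m (\<lambda>(i,j). chain_prod (n 0) B 0 $$ (g i, h j))"
    define w where "w = (\<lambda>p. signof p * (\<Prod>i\<in>{0..<m}. ?M $$ (i, p i)) :: real)"
    have "det ?M = sum w {p. p permutes {0..<m}}" unfolding w_def by (rule det_def', simp)
    moreover have "goodterm k n B m g h 0 (w p)" if p: "p permutes {0..<m}" for p
    proof (cases "\<forall>i<m. g i = h (p i)")
      case True
      have "(\<Prod>i\<in>{0..<m}. ?M $$ (i, p i)) = 1"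
        using True p 0 g by (intro prod.neutral) (auto simp: permutes_in_image)
      hence "w p = signof p" unfolding w_def by simp
      have c1: "\<forall>j<m. (\<lambda>_. g) 0 j = g j \<and> (\<lambda>_. g) 0 j = h (p j)" using True by simp
      have c2: "\<forall>l\<le>0. inj_on ((\<lambda>_. g) l) {0..<m} \<and> (\<forall>j<m. (\<lambda>_. g) l j < n (l mod k))" using g by simp
      have c3: "w p = signof p * (\<Prod>j<m. \<Prod>l<0. B l $$ ((\<lambda>_. g) l j, (\<lambda>_. g) (Suc l) j))"
        using \<open>w p = signof p\<close> by simp
      show ?thesis unfolding goodterm_def
        apply (rule disjI2) apply (rule exI[of _ p]) apply (rule exI[of _ "\<lambda>_. g"])
        using p c1 c2 c3 by blast
    next
      case False
      then obtain i where i: "i < m" "g i \<noteq> h (p i)" by auto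
      have "?M $$ (i, p i) = 0" using i p 0 g by (auto simp: permutes_in_image)
      hence "(\<Prod>i\<in>{0..<m}. ?M $$ (i, p i)) = 0" using i by (intro prod_zero) auto
      then show ?thesis unfolding goodterm_def w_def by simp
    qed
    moreover have "finite {p. p permutes {0..<m}}" by (rule finite_permutations) simp
    ultimately show ?thesis
      by (intro exI[of _ "image_mset w (mset_set {p. p permutes {0..<m}})"] conjI)
        (auto simp: sum_unfold_sum_mset)
  qed
next
  case (Suc L)
  have L: "L < k" using Suc.prems(1) by simp
  show ?case
  proof (cases "inj_on h {0..<m}")
    case False
    show ?thesis by (rule exI[of _ "{#}"], simp add: det_noninj_zero[OF False] del: chain_prod.simps)
  next
    case hinj: True
    let ?F = "{f. (\<forall>i\<in>{0..<m}. f i \<in> {0..<n L}) \<and> (\<forall>i. i \<notin> {0..<m} \<longrightarrow> f i = i)}"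
    have fF: "finite ?F" by (rule finite_bounded_functions, auto)
    have P: "chain_prod (n 0) B L \<in> carrier_mat (n 0) (n L)" using chain_carrier[OF k B, of L] L by simp
    have BL: "B L \<in> carrier_mat (n L) (n (Suc L mod k))" using B L by simp
    define c where "c = (\<lambda>f. \<Prod>j<m. B L $$ (f j, h j))"
    have "det (mat m m (\<lambda>(i,j). chain_prod (n 0) B (Suc L) $$ (g i, h j))) =
      (\<Sum>f\<in>?F. det (mat m m (\<lambda>(i,j). chain_prod (n 0) B L $$ (g i, f j))) * c f)"
      unfolding c_def chain_prod.simps by (rule cb_col[OF P BL]) (use g(2) Suc.prems(2) in auto)
    note expd = this
    have "\<forall>f\<in>?F. \<exists>N. (\<forall>x\<in>#N. goodterm k n B m g f L x) \<and>
      det (mat m m (\<lambda>(i,j). chain_prod (n 0) B L $$ (g i, f j))) = sum_mset N"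
    proof
      fix f assume f: "f \<in> ?F"
      have "\<forall>j<m. f j < n (L mod k)" using f L by auto
      then show "\<exists>N. (\<forall>x\<in>#N. goodterm k n B m g f L x) \<and>
        det (mat m m (\<lambda>(i,j). chain_prod (n 0) B L $$ (g i, f j))) = sum_mset N"
        by (rule Suc.hyps[rotated]) (use L in auto)
    qed
    then have "\<exists>\<Phi>. \<forall>f\<in>?F. (\<forall>x\<in>#\<Phi> f. goodterm k n B m g f L x) \<and>
      det (mat m m (\<lambda>(i,j). chain_prod (n 0) B L $$ (g i, f j))) = sum_mset (\<Phi> f)"
      by (rule bchoice)
    then obtain \<Phi> where \<Phi>: "\<forall>f\<in>?F. (\<forall>x\<in>#\<Phi> f. goodterm k n B m g f L x) \<and>
      det (mat m m (\<lambda>(i,j). chain_prod (n 0) B L $$ (g i, f j))) = sum_mset (\<Phi> f)"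
      by blast
    define M where "M = (\<Sum>f\<in>?F. image_mset (\<lambda>x. x * c f) (\<Phi> f))"
    have "det (mat m m (\<lambda>(i,j). chain_prod (n 0) B (Suc L) $$ (g i, h j))) =
      (\<Sum>f\<in>?F. sum_mset (\<Phi> f) * c f)"
      using expd \<Phi> by simp
    also have "\<dots> = sum_mset M" unfolding M_def sum_mset_sum_set[OF fF]
      by (intro sum.cong refl) (simp add: sum_mset_mult_right)
    finally have dt: "det (mat m m (\<lambda>(i,j). chain_prod (n 0) B (Suc L) $$ (g i, h j))) = sum_mset M" .
    have gd: "\<forall>y\<in>#M. goodterm k n B m g h (Suc L) y"
    proof
      fix y assume "y \<in># M"
      then obtain f x where f: "f \<in> ?F" and x: "x \<in># \<Phi> f" and y: "y = x * c f"
        unfolding M_def set_mset_sum[OF fF] by auto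
      hence "goodterm k n B m g f L x" using \<Phi> by blast
      then show "goodterm k n B m g h (Suc L) y" unfolding y c_def
        using good_step[of k n B m g f L _ h] hinj Suc.prems by simp
    qed
    show ?thesis using gd dt by blast
  qed
qed

lemma sgn_prod_real: "sgn (prod f A) = (\<Prod>x\<in>A. sgn (f x::real))"
  by (induct A rule: infinite_finite_induct) (auto simp: sgn_mult)

lemma prod_sign_count:
  fixes N :: nat shows "(\<forall>q<N. W q \<noteq> 0) \<Longrightarrow> (\<Prod>q<N. sgn (W q :: real)) = (-1)^card {q. q<N \<and> W q < 0}"
proof (induct N)
  case 0
  then show ?case by simp
next
  case (Suc N)
  have IH: "(\<Prod>q<N. sgn (W q)) = (-1)^card {q. q<N \<and> W q < 0}" using Suc by simp
  have fin: "finite {q. q<N \<and> W q < 0}" by simp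
  show ?case
  proof (cases "W N < 0")
    case True
    have "{q. q<Suc N \<and> W q < 0} = insert N {q. q<N \<and> W q < 0}" using True by auto
    hence "card {q. q<Suc N \<and> W q < 0} = Suc (card {q. q<N \<and> W q < 0})" using fin by simp
    then show ?thesis using IH True by simp
  next
    case False
    have "W N > 0" using False Suc.prems by (meson lessI linorder_neqE_linordered_idom)
    have "{q. q<Suc N \<and> W q < 0} = {q. q<N \<and> W q < 0}" using False by (auto simp: less_Suc_eq)
    then show ?thesis using IH \<open>W N > 0\<close> by simp
  qed
qed

lemma divmod_aux: "r < (k::nat) \<Longrightarrow> (t*k + r) div k = t \<and> (t*k + r) mod k = r"
  by simp

lemma prod_group:
  fixes k c :: nat
  assumes "k > 0"
  shows "(\<Prod>q<k*c. \<phi> (q div k) (q mod k)) = (\<Prod>t<c. \<Prod>l<k. \<phi> t l :: real)"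
proof -
  have "(\<Prod>q<k*c. \<phi> (q div k) (q mod k)) = (\<Prod>t<c. \<Prod>q\<in>{t*k..<t*k+k}. \<phi> (q div k) (q mod k))"
    using prod.nat_group[of "\<lambda>q. \<phi> (q div k) (q mod k)" k c] by (simp add: mult.commute)
  also have "\<dots> = (\<Prod>t<c. \<Prod>l<k. \<phi> t l)"
  proof (rule prod.cong[OF refl])
    fix t
    have "(\<Prod>q\<in>{t*k..<t*k+k}. \<phi> (q div k) (q mod k)) = (\<Prod>l\<in>{0..<k}. \<phi> ((l + t*k) div k) ((l + t*k) mod k))"
      using prod.shift_bounds_nat_ivl[of "\<lambda>q. \<phi> (q div k) (q mod k)" 0 "t*k" k] by (simp add: add.commute)
    also have "\<dots> = (\<Prod>l<k. \<phi> t l)"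
      using assms by (intro prod.cong) (auto simp: lessThan_atLeast0)
    finally show "(\<Prod>q\<in>{t*k..<t*k+k}. \<phi> (q div k) (q mod k)) = (\<Prod>l<k. \<phi> t l)" .
  qed
  finally show ?thesis .
qed

lemma parity_aux:
  assumes "\<not> ((-1::int)^(c + N) = 1)"
  shows "(-1::real)^N = - ((-1)^c)"
proof -
  have "odd (c + N)" using assms by (metis neg_one_even_power)
  then show ?thesis by (cases "even c") (auto simp: neg_one_even_power neg_one_odd_power)
qed

lemma cyc_cond:
  assumes k: "k > 0" and A: "\<forall>j<k. A j \<in> carrier_mat (n j) (n (Suc j mod k))"
    and ecf: "e_cycle_free k A"
    and F0: "\<forall>j<m. F 0 j = s j \<and> F k j = s (p j)"
    and Fl: "\<forall>l\<le>k. inj_on (F l) {0..<m} \<and> (\<forall>j<m. F l j < n (l mod k))"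
    and nz: "\<forall>j<m. \<forall>l<k. A l $$ (F l j, F (Suc l) j) \<noteq> 0"
    and p: "p permutes {0..<m}"
    and cs: "iscyc p cs" and csub: "set cs \<subseteq> {0..<m}"
  shows "(\<Prod>j\<in>set cs. \<Prod>l<k. sgn (A l $$ (F l j, F (Suc l) j))) = - ((-1)^length cs)"
proof -
  define c where "c = length cs"
  have c0: "c > 0" using cs unfolding iscyc_def c_def by auto
  have dcs: "distinct cs" using cs unfolding iscyc_def by auto
  have csm: "\<And>t. t < c \<Longrightarrow> cs!t < m" using csub unfolding c_def by (meson atLeastLessThan_iff nth_mem subsetD)
  have pc: "\<And>t. t < c \<Longrightarrow> p (cs!t) = cs!(Suc t mod c)" using cs unfolding iscyc_def c_def by auto
  define G where "G = map (\<lambda>q. (q mod k, F (q mod k) (cs!(q div k)))) [0..<k*c]"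
  have lenG: "length G = k*c" unfolding G_def by simp
  have Gnth: "\<And>q. q < k*c \<Longrightarrow> G!q = (q mod k, F (q mod k) (cs!(q div k)))" unfolding G_def by simp
  have qdiv: "\<And>q. q < k*c \<Longrightarrow> q div k < c" by (simp add: div_less_iff_less_mult mult.commute k)
  have Fk: "\<And>t. t < c \<Longrightarrow> F k (cs!t) = F 0 (cs!(Suc t mod c))"
  proof -
    fix t assume t: "t < c"
    have "F k (cs!t) = s (p (cs!t))" using F0 csm[OF t] by simp
    also have "\<dots> = s (cs!(Suc t mod c))" using pc[OF t] by simp
    also have "\<dots> = F 0 (cs!(Suc t mod c))" using F0 csm[of "Suc t mod c"] c0 by simp
    finally show "F k (cs!t) = F 0 (cs!(Suc t mod c))" .
  qed
  have nxt: "G!(Suc q mod (k*c)) = (Suc (q mod k) mod k, F (Suc (q mod k)) (cs!(q div k)))" if q: "q < k*c" for q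
  proof -
    define l t where "l = q mod k" and "t = q div k"
    have qe: "q = t*k + l" unfolding l_def t_def by simp
    have lk: "l < k" unfolding l_def using k by simp
    have tc: "t < c" unfolding t_def using qdiv[OF q] .
    show ?thesis
    proof (cases "Suc l < k")
      case True
      have sq: "Suc q = t*k + Suc l" using qe by simp
      have "Suc q < k*c"
      proof -
        have "Suc q < t*k + k" using sq True by simp
        also have "\<dots> = Suc t * k" by simp
        also have "\<dots> \<le> c * k" using tc by (intro mult_le_mono1) simp
        finally show ?thesis using True sq by (simp add: mult.commute)
      qed
      hence "Suc q mod (k*c) = Suc q" by simp
      moreover have "Suc q div k = t" "Suc q mod k = Suc l" using divmod_aux[OF True, of t] sq by auto
      ultimately show ?thesis using Gnth[OF \<open>Suc q < k*c\<close>] True unfolding l_def[symmetric] t_def[symmetric] by simp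
    next
      case False
      hence lk1: "Suc l = k" using lk by simp
      have sq: "Suc q = Suc t * k" using qe lk1 by simp
      have r: "(Suc (q mod k) mod k, F (Suc (q mod k)) (cs!(q div k))) = (0, F 0 (cs!(Suc t mod c)))"
        unfolding l_def[symmetric] t_def[symmetric] lk1 using Fk[OF tc] by simp
      show ?thesis
      proof (cases "Suc t < c")
        case True
        have "Suc t * k < c * k" using True k by (intro mult_less_mono1) auto
        hence lt: "Suc q < k*c" using sq by (simp add: mult.commute)
        hence "Suc q mod (k*c) = Suc q" by simp
        moreover have "Suc q div k = Suc t" "Suc q mod k = 0" using sq k by auto
        ultimately show ?thesis using Gnth[OF lt] r True by simp
      next
        case False
        hence "Suc t = c" using tc by simp
        hence "Suc q = k*c" using sq by (simp add: mult.commute)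
        hence "Suc q mod (k*c) = 0" by simp
        moreover have "G!0 = (0, F 0 (cs!0))" using Gnth[of 0] c0 k by simp
        ultimately show ?thesis using r \<open>Suc t = c\<close> by simp
      qed
    qed
  qed
  have dG: "distinct G" unfolding G_def
  proof (subst distinct_map, intro conjI)
    show "inj_on (\<lambda>q. (q mod k, F (q mod k) (cs!(q div k)))) (set [0..<k*c])"
    proof (rule inj_onI)
      fix q1 q2 assume q1: "q1 \<in> set [0..<k*c]" and q2: "q2 \<in> set [0..<k*c]"
        and eq: "(q1 mod k, F (q1 mod k) (cs!(q1 div k))) = (q2 mod k, F (q2 mod k) (cs!(q2 div k)))"
      have m12: "q1 mod k = q2 mod k" using eq by simp
      have t1: "q1 div k < c" "q2 div k < c" using q1 q2 qdiv by auto
      have lk: "q1 mod k \<le> k" using k by (simp add: less_imp_le)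
      have "F (q1 mod k) (cs!(q1 div k)) = F (q1 mod k) (cs!(q2 div k))" using eq m12 by simp
      moreover have "inj_on (F (q1 mod k)) {0..<m}" using Fl lk by blast
      ultimately have "cs!(q1 div k) = cs!(q2 div k)" using csm t1 unfolding inj_on_def by auto
      hence "q1 div k = q2 div k" using dcs t1 nth_eq_iff_index_eq unfolding c_def by blast
      thus "q1 = q2" using m12 by (metis div_mult_mod_eq)
    qed
  qed simp
  have edges: "\<forall>q<length G. is_edge k A (G!q) (G!(Suc q mod length G))"
  proof (intro allI impI)
    fix q assume "q < length G"
    hence q: "q < k*c" using lenG by simp
    define l x where "l = q mod k" and "x = cs!(q div k)"
    have lk: "l < k" unfolding l_def using k by simp
    have xm: "x < m" unfolding x_def using csm qdiv[OF q] by simp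
    have g1: "G!q = (l, F l x)" using Gnth[OF q] unfolding l_def x_def by simp
    have g2: "G!(Suc q mod length G) = (Suc l mod k, F (Suc l) x)" using nxt[OF q] lenG unfolding l_def x_def by simp
    have Al: "A l \<in> carrier_mat (n l) (n (Suc l mod k))" using A lk by simp
    have As: "A (Suc l mod k) \<in> carrier_mat (n (Suc l mod k)) (n (Suc (Suc l mod k) mod k))" using A k by simp
    have b1: "F l x < n l" using Fl lk xm by (metis less_imp_le mod_less)
    have b2: "F (Suc l) x < n (Suc l mod k)" using Fl lk xm by (metis Suc_leI)
    show "is_edge k A (G!q) (G!(Suc q mod length G))"
      unfolding is_edge_def is_vertex_def edge_weight_def g1 g2
      using lk k Al As b1 b2 nz xm by auto
  qed
  have dcyc: "is_dcycle k A G" unfolding is_dcycle_def using dG edges lenG k c0 by auto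
  define W where "W = (\<lambda>q. A (q mod k) $$ (F (q mod k) (cs!(q div k)), F (Suc (q mod k)) (cs!(q div k))))"
  have neg: "neg_edges A G = card {q. q < k*c \<and> W q < 0}"
    unfolding neg_edges_def lenG
  proof (rule arg_cong[where f=card], rule Collect_cong)
    fix q
    show "(q < k * c \<and> edge_weight A (G ! q) (G ! (Suc q mod (k * c))) < 0) = (q < k * c \<and> W q < 0)"
      using Gnth nxt unfolding edge_weight_def W_def by auto
  qed
  have notE: "\<not> ((-1::int)^(c + neg_edges A G) = 1)"
    using ecf dcyc lenG k unfolding e_cycle_free_def is_e_cycle_def by auto
  have Wnz: "\<forall>q<k*c. W q \<noteq> 0"
  proof (intro allI impI)
    fix q assume q: "q < k*c"
    show "W q \<noteq> 0" unfolding W_def using nz csm[OF qdiv[OF q]] k by simp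
  qed
  have "(\<Prod>q<k*c. sgn (W q)) = (-1)^card {q. q<k*c \<and> W q < 0}" by (rule prod_sign_count[OF Wnz])
  moreover have "(\<Prod>q<k*c. sgn (W q)) = (\<Prod>t<c. \<Prod>l<k. sgn (A l $$ (F l (cs!t), F (Suc l) (cs!t))))"
    unfolding W_def by (rule prod_group[OF k, where \<phi>="\<lambda>t l. sgn (A l $$ (F l (cs!t), F (Suc l) (cs!t)))"])
  moreover have "(\<Prod>j\<in>set cs. \<Prod>l<k. sgn (A l $$ (F l j, F (Suc l) j))) = (\<Prod>t<c. \<Prod>l<k. sgn (A l $$ (F l (cs!t), F (Suc l) (cs!t))))"
    using prod.reindex_bij_betw[OF bij_betw_nth[OF dcs refl refl], of "\<lambda>j. \<Prod>l<k. sgn (A l $$ (F l j, F (Suc l) j))"]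
    unfolding c_def by simp
  ultimately have "(\<Prod>j\<in>set cs. \<Prod>l<k. sgn (A l $$ (F l j, F (Suc l) j))) = (-1)^neg_edges A G"
    using neg by simp
  also have "\<dots> = - ((-1)^c)" by (rule parity_aux[OF notE])
  finally show ?thesis unfolding c_def .
qed

lemma Q_sgn:
  assumes "X \<in> \<Q> M" "i < dim_row M" "j < dim_col M"
  shows "sgn (X$$(i,j)) = sgn (M$$(i,j))"
proof -
  have h: "(M $$ (i,j) > 0 \<longrightarrow> X $$ (i,j) > 0) \<and> (M $$ (i,j) < 0 \<longrightarrow> X $$ (i,j) < 0) \<and> (M $$ (i,j) = 0 \<longrightarrow> X $$ (i,j) = 0)"
    using assms unfolding sign_pattern_class_def by blast
  show ?thesis
  proof (cases "M $$ (i,j) > 0")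
    case True then show ?thesis using h by simp
  next
    case False
    then show ?thesis using h by (cases "M $$ (i,j) < 0") auto
  qed
qed

lemma Q_carrier: "X \<in> \<Q> M \<Longrightarrow> M \<in> carrier_mat r c \<Longrightarrow> X \<in> carrier_mat r c"
  unfolding sign_pattern_class_def carrier_mat_def by auto

lemma sum_mset_nonneg_real: "(\<forall>x\<in>#M. x \<ge> (0::real)) \<Longrightarrow> sum_mset M \<ge> 0"
  by (induct M) auto

lemma final_sign:
  assumes k: "k > 0" and A: "\<forall>j<k. A j \<in> carrier_mat (n j) (n (Suc j mod k))"
    and BQ: "\<forall>j<k. B j \<in> \<Q> (A j)"
    and ecf: "e_cycle_free k A"
    and gd: "goodterm k n B m s s k x"
  shows "x \<ge> 0"
proof (cases "x = 0")
  case True then show ?thesis by simp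
next
  case False
  then obtain p F where p: "p permutes {0..<m}" and F0: "\<forall>j<m. F 0 j = s j \<and> F k j = s (p j)"
    and Fl: "\<forall>l\<le>k. inj_on (F l) {0..<m} \<and> (\<forall>j<m. F l j < n (l mod k))"
    and x: "x = signof p * (\<Prod>j<m. \<Prod>l<k. B l $$ (F l j, F (Suc l) j))"
    using gd unfolding goodterm_def by blast
  define T where "T = (\<lambda>j. \<Prod>l<k. B l $$ (F l j, F (Suc l) j))"
  show ?thesis
  proof (cases "\<exists>j<m. T j = 0")
    case True
    then obtain j where "j < m" "T j = 0" by auto
    hence z: "(\<Prod>j<m. T j) = 0" by (intro prod_zero) auto
    have "x = signof p * (\<Prod>j<m. T j)" using x unfolding T_def .
    hence "x = 0" using z by (simp only: mult_zero_right)
    then show ?thesis by simp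
  next
    case False
    hence Tnz: "\<forall>j<m. T j \<noteq> 0" by auto
    have bnd: "\<And>j l. j < m \<Longrightarrow> l < k \<Longrightarrow> F l j < dim_row (A l) \<and> F (Suc l) j < dim_col (A l)"
    proof -
      fix j l assume j: "j < m" and l: "l < k"
      have "F l j < n (l mod k)" using Fl j l less_imp_le by blast
      hence "F l j < n l" using l by simp
      have "F (Suc l) j < n (Suc l mod k)" using Fl j l by (auto simp: Suc_leI)
      then show "F l j < dim_row (A l) \<and> F (Suc l) j < dim_col (A l)" using A l \<open>F l j < n l\<close> by auto
    qed
    have sg: "\<And>j l. j < m \<Longrightarrow> l < k \<Longrightarrow> sgn (B l $$ (F l j, F (Suc l) j)) = sgn (A l $$ (F l j, F (Suc l) j))"
      using Q_sgn BQ bnd by blast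
    define \<epsilon> where "\<epsilon> = (\<lambda>j. \<Prod>l<k. sgn (A l $$ (F l j, F (Suc l) j)))"
    have epsT: "\<And>j. j < m \<Longrightarrow> \<epsilon> j = sgn (T j)"
      unfolding \<epsilon>_def T_def sgn_prod_real using sg by (intro prod.cong) auto
    have nz: "\<forall>j<m. \<forall>l<k. A l $$ (F l j, F (Suc l) j) \<noteq> 0"
    proof (intro allI impI)
      fix j l assume j: "j < m" and l: "l < k"
      have "T j \<noteq> 0" using Tnz j by simp
      hence "B l $$ (F l j, F (Suc l) j) \<noteq> 0" unfolding T_def using l by auto
      hence "sgn (B l $$ (F l j, F (Suc l) j)) \<noteq> 0" by (simp add: sgn_if)
      thus "A l $$ (F l j, F (Suc l) j) \<noteq> 0" using sg[OF j l] by auto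
    qed
    have epm: "\<forall>j\<in>{0..<m}. \<epsilon> j = 1 \<or> \<epsilon> j = -1"
    proof
      fix j assume "j \<in> {0..<m}"
      hence j: "j < m" by simp
      show "\<epsilon> j = 1 \<or> \<epsilon> j = -1" using epsT[OF j] Tnz j by (cases "T j > 0") (auto simp: sgn_if)
    qed
    have cycs: "\<forall>cs. iscyc p cs \<longrightarrow> set cs \<subseteq> {0..<m} \<longrightarrow> prod \<epsilon> (set cs) = - ((-1)^length cs)"
      unfolding \<epsilon>_def using cyc_cond[OF k A ecf F0 Fl nz p] by blast
    have pe: "prod \<epsilon> {0..<m} = of_int (sign p)"
      by (rule sign_lemma[OF _ p epm cycs]) simp
    have "(\<Prod>j<m. T j) = (\<Prod>j<m. \<epsilon> j * \<bar>T j\<bar>)"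
      using epsT by (intro prod.cong refl) (simp add: sgn_mult_abs)
    also have "\<dots> = of_int (sign p) * (\<Prod>j<m. \<bar>T j\<bar>)"
      using pe by (simp add: prod.distrib lessThan_atLeast0)
    finally have "x = of_int (sign p) * of_int (sign p) * (\<Prod>j<m. \<bar>T j\<bar>)"
      using x unfolding T_def by simp
    also have "\<dots> = (\<Prod>j<m. \<bar>T j\<bar>)"
      by (metis (mono_tags) mult_1 of_int_1 of_int_mult sign_idempotent)
    finally show ?thesis by (simp add: prod_nonneg)
  qed
qed

theorem corollary4:
  fixes k :: nat and n :: "nat \<Rightarrow> nat" and A :: "nat \<Rightarrow> real mat"
  assumes "k > 0"
    and "\<forall>j < k. n j > 0"
    and "\<forall>j < k. A j \<in> carrier_mat (n j) (n (Suc j mod k))"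
    and "e_cycle_free k A"
  shows "\<forall>M \<in> sign_class_product k A. P0_matrix M"
proof
  note k = assms(1) and Ac = assms(3) and ecf = assms(4)
  fix M assume "M \<in> sign_class_product k A"
  then obtain B where M: "M = cyclic_product k B" and BQ: "\<forall>j<k. B j \<in> \<Q> (A j)"
    unfolding sign_class_product_def by blast
  have Bc: "\<forall>j<k. B j \<in> carrier_mat (n j) (n (Suc j mod k))" using BQ Ac Q_carrier by blast
  have d0: "dim_row (B 0) = n 0" using Bc k by auto
  have Mc: "M \<in> carrier_mat (n 0) (n 0)"
    using chain_carrier[OF k Bc, of k] M d0 unfolding cyclic_product_def by simp
  have Mdef: "M = chain_prod (n 0) B k" using M d0 unfolding cyclic_product_def by simp
  show "P0_matrix M" unfolding P0_matrix_def
  proof (intro conjI allI impI)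
    show "M \<in> carrier_mat (dim_row M) (dim_row M)" using Mc by simp
    fix S assume S: "S \<subseteq> {..<dim_row M}"
    hence S0: "S \<subseteq> {..<n 0}" using Mc by simp
    define m where "m = card S"
    have cS: "card {i. i < dim_row M \<and> i \<in> S} = m" "card {i. i < dim_col M \<and> i \<in> S} = m"
      unfolding m_def using S0 Mc by (auto intro!: arg_cong[where f=card])
    have sub: "submatrix M S S = mat m m (\<lambda>(i,j). chain_prod (n 0) B k $$ (pick S i, pick S j))"
      by (rule eq_matI, auto simp: dim_submatrix cS submatrix_index Mdef[symmetric])
    have fS: "finite S" using S0 finite_subset by blast
    have pin: "\<And>j. j < m \<Longrightarrow> pick S j < n 0" using pick_in_set_le S0 unfolding m_def by blast
    have pinj: "inj_on (pick S) {0..<m}"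
    proof (rule inj_onI)
      fix x y assume "x \<in> {0..<m}" "y \<in> {0..<m}" "pick S x = pick S y"
      thus "x = y" using pick_mono_le[of x S y] pick_mono_le[of y S x] unfolding m_def
        by (metis atLeastLessThan_iff linorder_neqE_nat less_irrefl)
    qed
    have "\<exists>N. (\<forall>x\<in>#N. goodterm k n B m (pick S) (pick S) k x) \<and>
      det (mat m m (\<lambda>(i,j). chain_prod (n 0) B k $$ (pick S i, pick S j))) = sum_mset N"
      by (rule expand[OF k Bc pinj]) (use pin in auto)
    then obtain N where N: "\<forall>x\<in>#N. goodterm k n B m (pick S) (pick S) k x"
      and dN: "det (mat m m (\<lambda>(i,j). chain_prod (n 0) B k $$ (pick S i, pick S j))) = sum_mset N" by blast
    have "\<forall>x\<in>#N. x \<ge> 0" using N final_sign[OF k Ac BQ ecf] by blast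
    then show "det (submatrix M S S) \<ge> 0" unfolding sub dN by (rule sum_mset_nonneg_real)
  qed
qed

end
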